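(* Let $k\ge1$. On $[0,1)$ the function $T_{k,1}$ is nonincreasing and the function $T_{k,k}$ is nondecreasing.
   Context: For an integer $k\ge1$, $f_k:[0,1]\to[0,1]$ denotes the unique decreasing function satisfying $f_k(x)^k-f_k(x)^{k+1}=x^k-x^{k+1}$ for all $x\in[0,1]$; it is continuous with $f_k(0)=1$, $f_k(1)=0$. For $1\le j\le k$ and $y\in[0,1)$ define $T_{k,j}(y):=\dfrac{(1-y)\,y^{j-1}}{f_k(y)^j}$. *)

theory Defs
  imports "HOL-Analysis.Analysis"
begin

definition fk :: "nat \<Rightarrow> real \<Rightarrow> real" where
  "fk k = (THE f. (\<forall>x\<in>{0..1}. f x \<in> {0..1} \<and> f x ^ k - f x ^ (k+1) = x ^ k - x ^ (k+1))
                 \<and> strict_antimono_on {0..1} f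
                 \<and> (\<forall>x. x \<notin> {0..1} \<longrightarrow> f x = 0))"

definition Tkj :: "nat \<Rightarrow> nat \<Rightarrow> real \<Rightarrow> real" where
  "Tkj k j y = (1 - y) * y ^ (j - 1) / (fk k y) ^ j"

end

theory Submission imports Defs begin

definition gk :: "nat \<Rightarrow> real \<Rightarrow> real" where "gk k x = x^k - x^(k+1)"
definition mk :: "nat \<Rightarrow> real" where "mk k = real k / (real k + 1)"

lemma gk_deriv: "k \<ge> 1 \<Longrightarrow> (gk k has_real_derivative (x^(k-1) * (real k - (real k + 1) * x))) (at x)"
proof -
  assume k: "k \<ge> 1"
  have xk: "x^(k-Suc 0)*x = x^k" using k by (cases k) (simp_all add: algebra_simps)
  have "(gk k has_real_derivative (real k * x^(k-1) - real (k+1) * x^k)) (at x)"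
    using xk unfolding gk_def[abs_def] by (auto intro!: derivative_eq_intros simp: algebra_simps)
  moreover have "real k * x^(k-1) - real (k+1) * x^k = x^(k-1) * (real k - (real k + 1) * x)"
  proof -
    show ?thesis using k by (cases k) (simp_all add: algebra_simps)
  qed
  ultimately show ?thesis by simp
qed

lemma mk_bounds: "k \<ge> 1 \<Longrightarrow> 0 < mk k \<and> mk k < 1"
  by (auto simp: mk_def field_simps)

lemma gk_inc: assumes "k \<ge> 1" "0 \<le> x" "x < y" "y \<le> mk k" shows "gk k x < gk k y"
proof (rule DERIV_pos_imp_increasing_open[OF assms(3)])
  fix z assume z: "x < z" "z < y"
  have "z*(real k+1) < y*(real k +1)" using z by (intro mult_strict_right_mono) auto
  hence "real k - (real k + 1) * z > 0" using z assms(4) unfolding mk_def by (simp add: field_simps)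
  moreover have "z^(k-1) > 0" using z assms(2) by simp
  ultimately show "\<exists>d. (gk k has_real_derivative d) (at z) \<and> d > 0"
    using gk_deriv[OF assms(1)] by (intro exI[of _ "z^(k-1) * (real k - (real k + 1) * z)"] conjI) auto
next
  show "continuous_on {x..y} (gk k)" unfolding gk_def[abs_def] by (intro continuous_intros)
qed

lemma gk_dec: assumes "k \<ge> 1" "mk k \<le> x" "x < y" "y \<le> 1" shows "gk k x > gk k y"
proof (rule DERIV_neg_imp_decreasing_open[OF assms(3)])
  fix z assume z: "x < z" "z < y"
  have "x*(real k+1) < z*(real k +1)" using z by (intro mult_strict_right_mono) auto
  hence "real k - (real k + 1) * z < 0" using z assms(2) unfolding mk_def by (simp add: field_simps)
  moreover have "z^(k-1) > 0" using z assms(2) mk_bounds[OF assms(1)] by simp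
  ultimately show "\<exists>d. (gk k has_real_derivative d) (at z) \<and> d < 0"
    using gk_deriv[OF assms(1)] by (intro exI[of _ "z^(k-1) * (real k - (real k + 1) * z)"] conjI) (auto simp: mult_pos_neg)
next
  show "continuous_on {x..y} (gk k)" unfolding gk_def[abs_def] by (intro continuous_intros)
qed


lemma gk_inj_lo: assumes "k \<ge> 1" "0 \<le> a" "a \<le> mk k" "0 \<le> b" "b \<le> mk k" "gk k a = gk k b" shows "a = b"
  using gk_inc[OF assms(1), of a b] gk_inc[OF assms(1), of b a] assms
  by (cases a b rule: linorder_cases) auto

lemma gk_inj_hi: assumes "k \<ge> 1" "mk k \<le> a" "a \<le> 1" "mk k \<le> b" "b \<le> 1" "gk k a = gk k b" shows "a = b"
  using gk_dec[OF assms(1), of a b] gk_dec[OF assms(1), of b a] assms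
  by (cases a b rule: linorder_cases) auto

lemma gk_nonneg: "0 \<le> x \<Longrightarrow> x \<le> 1 \<Longrightarrow> 0 \<le> gk k x"
proof -
  assume "0 \<le> x" "x \<le> 1"
  hence "0 \<le> x^k * (1 - x)" by simp
  thus ?thesis by (simp add: gk_def algebra_simps)
qed

lemma gk_0: "k \<ge> 1 \<Longrightarrow> gk k 0 = 0" by (simp add: gk_def)
lemma gk_1: "gk k 1 = 0" by (simp add: gk_def)

lemma gk_cont: "continuous_on A (gk k)" unfolding gk_def[abs_def] by (intro continuous_intros)

lemma ex_hi: assumes k: "k \<ge> 1" and x: "0 \<le> x" "x \<le> mk k" shows "\<exists>!y. mk k \<le> y \<and> y \<le> 1 \<and> gk k y = gk k x"
proof -
  have m: "0 < mk k" "mk k < 1" using mk_bounds[OF k] by auto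
  have A: "gk k x \<le> gk k (mk k)"
  proof (cases "x = mk k")
    case False thus ?thesis using gk_inc[OF k x(1), of "mk k"] x(2) by simp
  qed simp
  have B: "gk k 1 \<le> gk k x" unfolding gk_1 using gk_nonneg[of x k] x m by simp
  have "\<exists>y. mk k \<le> y \<and> y \<le> 1 \<and> gk k y = gk k x"
    by (rule IVT2'[of "gk k", OF B A]) (use m gk_cont in auto)
  then obtain y where y: "mk k \<le> y \<and> y \<le> 1 \<and> gk k y = gk k x" by blast
  show ?thesis
  proof (rule ex1I[of _ y])
    show "mk k \<le> y \<and> y \<le> 1 \<and> gk k y = gk k x" using y .
  next
    fix z assume "mk k \<le> z \<and> z \<le> 1 \<and> gk k z = gk k x"
    thus "z = y" using gk_inj_hi[OF k, of z y] y by auto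
  qed
qed

lemma ex_lo: assumes k: "k \<ge> 1" and x: "mk k < x" "x \<le> 1" shows "\<exists>!y. 0 \<le> y \<and> y \<le> mk k \<and> gk k y = gk k x"
proof -
  have m: "0 < mk k" "mk k < 1" using mk_bounds[OF k] by auto
  have A: "gk k x \<le> gk k (mk k)" using gk_dec[OF k _ x(1) x(2)] by simp
  have B: "gk k 0 \<le> gk k x" unfolding gk_0[OF k] using gk_nonneg[of x k] x m by simp
  have "\<exists>y. 0 \<le> y \<and> y \<le> mk k \<and> gk k y = gk k x"
    by (rule IVT'[of "gk k", OF B A]) (use m gk_cont in auto)
  then obtain y where y: "0 \<le> y \<and> y \<le> mk k \<and> gk k y = gk k x" by blast
  show ?thesis
  proof (rule ex1I[of _ y])
    show "0 \<le> y \<and> y \<le> mk k \<and> gk k y = gk k x" using y .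
  next
    fix z assume "0 \<le> z \<and> z \<le> mk k \<and> gk k z = gk k x"
    thus "z = y" using gk_inj_lo[OF k, of z y] y by auto
  qed
qed

definition ff :: "nat \<Rightarrow> real \<Rightarrow> real" where
  "ff k x = (if 0 \<le> x \<and> x \<le> mk k then (THE y. mk k \<le> y \<and> y \<le> 1 \<and> gk k y = gk k x)
     else if mk k < x \<and> x \<le> 1 then (THE y. 0 \<le> y \<and> y \<le> mk k \<and> gk k y = gk k x) else 0)"

lemma ff_lo: assumes k: "k \<ge> 1" and x: "0 \<le> x" "x \<le> mk k" shows "mk k \<le> ff k x \<and> ff k x \<le> 1 \<and> gk k (ff k x) = gk k x"
  using theI'[OF ex_hi[OF k x]] x by (simp add: ff_def)

lemma ff_hi: assumes k: "k \<ge> 1" and x: "mk k < x" "x \<le> 1" shows "0 \<le> ff k x \<and> ff k x \<le> mk k \<and> gk k (ff k x) = gk k x"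
  using theI'[OF ex_lo[OF k x]] x by (simp add: ff_def)

lemma ff_out: "\<not> (0 \<le> x \<and> x \<le> 1) \<Longrightarrow> k \<ge> 1 \<Longrightarrow> ff k x = 0"
  using mk_bounds[of k] by (auto simp: ff_def)

lemma ff_m: assumes k: "k \<ge> 1" shows "ff k (mk k) = mk k"
  using ff_lo[OF k, of "mk k"] gk_inj_hi[OF k, of "ff k (mk k)" "mk k"] mk_bounds[OF k] by auto

lemma ff_roots: assumes k: "k \<ge> 1" and x: "0 \<le> x" "x \<le> 1" and z: "0 \<le> z" "z \<le> 1" and e: "gk k z = gk k x"
  shows "z = x \<or> z = ff k x"
proof (cases "x \<le> mk k")
  case True
  note F = ff_lo[OF k x(1) True]
  show ?thesis
  proof (cases "z \<le> mk k")
    case True thus ?thesis using gk_inj_lo[OF k z(1) True x(1)] \<open>x \<le> mk k\<close> e by auto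
  next
    case False thus ?thesis using gk_inj_hi[OF k _ z(2), of "ff k x"] F e by auto
  qed
next
  case False
  note F = ff_hi[OF k _ x(2)] False
  show ?thesis
  proof (cases "z \<le> mk k")
    case True thus ?thesis using gk_inj_lo[OF k z(1) True, of "ff k x"] F e by auto
  next
    case False thus ?thesis using gk_inj_hi[OF k _ z(2), of x] x \<open>\<not> x \<le> mk k\<close> e by auto
  qed
qed

lemma ff_strict: assumes k: "k \<ge> 1" and xy: "0 \<le> x" "x < y" "y \<le> 1" shows "ff k y < ff k x"
proof -
  consider "y \<le> mk k" | "mk k < x" | "x \<le> mk k" "mk k < y" by linarith
  thus ?thesis
  proof cases
    case 1
    have "gk k x < gk k y" using gk_inc[OF k xy(1,2) 1] .
    moreover have A: "mk k \<le> ff k x \<and> ff k x \<le> 1 \<and> gk k (ff k x) = gk k x" using ff_lo[OF k xy(1)] 1 xy by auto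
    moreover have B: "mk k \<le> ff k y \<and> ff k y \<le> 1 \<and> gk k (ff k y) = gk k y" using ff_lo[OF k] 1 xy by auto
    ultimately show ?thesis using gk_dec[OF k, of "ff k x" "ff k y"]
      by (cases "ff k x" "ff k y" rule: linorder_cases) auto
  next
    case 2
    have "gk k y < gk k x" using gk_dec[OF k _ xy(2,3)] 2 by auto
    moreover have A: "0 \<le> ff k x \<and> ff k x \<le> mk k \<and> gk k (ff k x) = gk k x" using ff_hi[OF k] 2 xy by auto
    moreover have B: "0 \<le> ff k y \<and> ff k y \<le> mk k \<and> gk k (ff k y) = gk k y" using ff_hi[OF k] 2 xy by auto
    ultimately show ?thesis using gk_inc[OF k, of "ff k y" "ff k x"] gk_inc[OF k, of "ff k x" "ff k y"]
      by (cases "ff k x" "ff k y" rule: linorder_cases) auto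
  next
    case 3
    have A: "mk k \<le> ff k x \<and> ff k x \<le> 1 \<and> gk k (ff k x) = gk k x" using ff_lo[OF k xy(1)] 3 by auto
    have B: "0 \<le> ff k y \<and> ff k y \<le> mk k \<and> gk k (ff k y) = gk k y" using ff_hi[OF k] 3 xy by auto
    show ?thesis
    proof (rule ccontr)
      assume "\<not> ?thesis"
      hence "ff k x = mk k" "ff k y = mk k" using A B by auto
      hence "gk k y = gk k (mk k)" using B by simp
      thus False using gk_dec[OF k _ 3(2) xy(3)] by simp
    qed
  qed
qed

lemma ff_fix: assumes k: "k \<ge> 1" and x: "0 \<le> x" "x \<le> 1" "ff k x = x" shows "x = mk k"
  using ff_lo[OF k x(1)] ff_hi[OF k _ x(2)] x by (cases "x \<le> mk k") auto

lemma ff_range: assumes k: "k \<ge> 1" and x: "0 \<le> x" "x \<le> 1" shows "0 \<le> ff k x \<and> ff k x \<le> 1 \<and> gk k (ff k x) = gk k x"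
  using ff_lo[OF k x(1)] ff_hi[OF k _ x(2)] mk_bounds[OF k] by (cases "x \<le> mk k") auto

lemma ff_pos: assumes k: "k \<ge> 1" and x: "0 \<le> x" "x < 1" shows "0 < ff k x"
  using ff_strict[OF k x(1,2)] ff_range[OF k, of 1] by auto

definition PP :: "nat \<Rightarrow> (real \<Rightarrow> real) \<Rightarrow> bool" where
  "PP k f = ((\<forall>x\<in>{0..1}. f x \<in> {0..1} \<and> f x ^ k - f x ^ (k+1) = x ^ k - x ^ (k+1))
                 \<and> strict_antimono_on {0..1} f
                 \<and> (\<forall>x. x \<notin> {0..1} \<longrightarrow> f x = 0))"

lemma PP_ff: assumes k: "k \<ge> 1" shows "PP k (ff k)"
  unfolding PP_def
proof (intro conjI ballI allI impI monotone_onI)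
  fix x :: real assume "x \<in> {0..1}"
  hence x: "0 \<le> x" "x \<le> 1" by auto
  show "ff k x \<in> {0..1}" using ff_range[OF k x] by auto
  show "ff k x ^ k - ff k x ^ (k+1) = x ^ k - x ^ (k+1)" using ff_range[OF k x] unfolding gk_def by blast
next
  fix x y :: real assume "x \<in> {0..1}" "y \<in> {0..1}" "x < y"
  thus "ff k y < ff k x" using ff_strict[OF k] by auto
next
  fix x :: real assume "x \<notin> {0..1}"
  thus "ff k x = 0" using ff_out[OF _ k] by auto
qed

lemma PP_unique: assumes k: "k \<ge> 1" and h: "PP k h" shows "h = ff k"
proof
  fix x
  have hr: "\<And>x. 0 \<le> x \<Longrightarrow> x \<le> 1 \<Longrightarrow> 0 \<le> h x \<and> h x \<le> 1 \<and> gk k (h x) = gk k x"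
    using h by (auto simp: PP_def gk_def)
  have hs: "\<And>x y. 0 \<le> x \<Longrightarrow> x < y \<Longrightarrow> y \<le> 1 \<Longrightarrow> h y < h x"
    using h unfolding PP_def monotone_on_def by auto
  have m: "0 < mk k" "mk k < 1" using mk_bounds[OF k] by auto
  show "h x = ff k x"
  proof (cases "0 \<le> x \<and> x \<le> 1")
    case False thus ?thesis using h ff_out[OF False k] by (auto simp: PP_def)
  next
    case True
    hence x: "0 \<le> x" "x \<le> 1" by auto
    have R: "\<And>y. 0 \<le> y \<Longrightarrow> y \<le> 1 \<Longrightarrow> h y = y \<or> h y = ff k y"
      using hr ff_roots[OF k] by blast
    show ?thesis
    proof (cases "h x = x")
      case False thus ?thesis using R x by blast
    next
      case hx: True
      consider "x < mk k" | "x = mk k" | "x > mk k" by linarith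
      thus ?thesis
      proof cases
        case 1
        define y where "y = (x + mk k)/2"
        have y: "0 \<le> y" "x < y" "y < mk k" using 1 x unfolding y_def by auto
        have "h y < x" using hs[OF x(1) y(2)] y m hx by auto
        moreover have "ff k y \<ge> mk k" using ff_lo[OF k y(1)] y by auto
        ultimately show ?thesis using R[of y] y m by auto
      next
        case 2 thus ?thesis using hx ff_m[OF k] by simp
      next
        case 3
        define y where "y = (x + mk k)/2"
        have y: "mk k < y" "y < x" using 3 x unfolding y_def by auto
        have "h y > x" using hs[OF _ y(2) x(2)] y m hx by auto
        moreover have "ff k y \<le> mk k" using ff_hi[OF k y(1)] y x by auto
        ultimately show ?thesis using R[of y] y m x by auto
      qed
    qed
  qed
qed

lemma fk_eq: assumes k: "k \<ge> 1" shows "fk k = ff k"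
proof -
  have "fk k = (THE f. PP k f)" unfolding fk_def PP_def by (rule refl)
  also have "\<dots> = ff k" by (rule the_equality[where P="PP k", OF PP_ff[OF k] PP_unique[OF k]])
  finally show ?thesis .
qed


definition SS :: "nat \<Rightarrow> real \<Rightarrow> real" where "SS k r = (\<Sum>i<k. r^i)"

lemma SS_ge1: assumes "k \<ge> 1" "0 \<le> r" shows "1 \<le> SS k r"
proof -
  have "(\<Sum>i\<in>{0}. r^i) \<le> (\<Sum>i<k. r^i)"
    by (rule sum_mono2) (use assms in auto)
  thus ?thesis by (simp add: SS_def)
qed

lemma SS_mono: assumes "0 \<le> r" "r \<le> s" shows "SS k r \<le> SS k s"
  unfolding SS_def by (rule sum_mono) (use assms in \<open>auto intro: power_mono\<close>)

lemma SS_1: "SS k 1 = real k" by (simp add: SS_def)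

lemma key: assumes k: "k \<ge> 1" and ab: "0 \<le> a" "0 < b" "a \<noteq> b" and e: "gk k a = gk k b"
  shows "(1 - a) / b = 1 / SS k (a / b)"
proof -
  define r where "r = a / b"
  have r0: "0 \<le> r" using ab by (simp add: r_def)
  have r1: "r \<noteq> 1" using ab by (simp add: r_def)
  have a: "a = r * b" using ab by (simp add: r_def)
  have E1: "(1 - a) * (b^k - a^k) = b^k * (b - a)"
    using e unfolding gk_def by (simp add: algebra_simps)
  have "b^k - a^k = b^k * (1 - r^k)" by (simp add: a power_mult_distrib algebra_simps)
  also have "\<dots> = b^k * ((1 - r) * SS k r)" by (simp add: SS_def one_diff_power_eq)
  finally have E2: "b^k - a^k = b^k * (1 - r) * SS k r" by simp
  have E3: "b - a = b * (1 - r)" by (simp add: a algebra_simps)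
  have "(b^k * (1 - r)) * ((1 - a) * SS k r) = (b^k * (1 - r)) * b"
    using E1 unfolding E2 E3 by (simp add: algebra_simps)
  moreover have "b^k * (1 - r) \<noteq> 0" using ab r1 by simp
  ultimately have "(1 - a) * SS k r = b" using ab by auto
  moreover have "SS k r > 0" using SS_ge1[OF k r0] by simp
  ultimately show ?thesis using ab by (simp add: r_def field_simps)
qed

lemma ff_0: assumes k: "k \<ge> 1" shows "ff k 0 = 1"
  using ff_lo[OF k, of 0] gk_inj_hi[OF k, of "ff k 0" 1] mk_bounds[OF k] gk_0[OF k] gk_1[of k] by auto

lemma T1_formula: assumes k: "k \<ge> 1" and u: "0 \<le> u" "u < 1"
  shows "(1 - u) / ff k u = 1 / SS k (u / ff k u)"
proof (cases "ff k u = u")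
  case True
  hence um: "u = mk k" using ff_fix[OF k u(1)] u by auto
  have "mk k > 0" using mk_bounds[OF k] by simp
  hence "(1 - mk k) / mk k = 1 / real k" unfolding mk_def using k by (simp add: field_simps)
  thus ?thesis using True um \<open>mk k > 0\<close> by (simp add: SS_1)
next
  case False
  show ?thesis
    by (rule key[OF k u(1) ff_pos[OF k u]]) (use False ff_range[OF k u(1)] u in auto)
qed

lemma Tk_formula: assumes k: "k \<ge> 1" and u: "0 < u" "u < 1"
  shows "(1 - ff k u) / u = 1 / SS k (ff k u / u)"
proof (cases "ff k u = u")
  case True
  hence um: "u = mk k" using ff_fix[OF k] u by auto
  have "mk k > 0" using mk_bounds[OF k] by simp
  hence "(1 - mk k) / mk k = 1 / real k" unfolding mk_def using k by (simp add: field_simps)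
  thus ?thesis using True um \<open>mk k > 0\<close> by (simp add: SS_1)
next
  case False
  have r: "0 \<le> ff k u \<and> ff k u \<le> 1 \<and> gk k (ff k u) = gk k u" using ff_range[OF k] u by auto
  show ?thesis
    by (rule key[OF k _ u(1)]) (use False r in auto)
qed

lemma Tkj1: assumes k: "k \<ge> 1" shows "Tkj k 1 u = (1 - u) / ff k u"
  by (simp add: Tkj_def fk_eq[OF k])

lemma Tkjk: assumes k: "k \<ge> 1" and u: "0 < u" "u < 1" shows "Tkj k k u = (1 - ff k u) / u"
proof -
  have r: "0 \<le> ff k u \<and> ff k u \<le> 1 \<and> gk k (ff k u) = gk k u" using ff_range[OF k] u by auto
  have v: "ff k u > 0" using ff_pos[OF k] u by auto
  have uk: "u^(k-1) * u = u^k" using k by (cases k) (simp_all add: algebra_simps)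
  have e: "(1 - u) * u^k = (1 - ff k u) * ff k u ^ k" using r unfolding gk_def by (simp add: algebra_simps)
  have "(1 - u) * u^(k-1) / ff k u ^ k = ((1 - u) * (u^(k-1) * u)) / (ff k u ^ k * u)"
    using u v by (simp add: field_simps)
  also have "\<dots> = (1 - ff k u) / u" unfolding uk e using u v by (simp add: field_simps)
  finally show ?thesis by (simp add: Tkj_def fk_eq[OF k])
qed

theorem mainTheorem8:
  fixes k :: nat
  assumes "k \<ge> 1"
  shows "antimono_on {0..<1} (Tkj k 1) \<and> mono_on {0..<1} (Tkj k k)"
proof
  note k = assms
  show "antimono_on {0..<1} (Tkj k 1)"
  proof (rule monotone_onI)
    fix r s :: real assume rs: "r \<in> {0..<1}" "s \<in> {0..<1}" "r \<le> s"
    have fr: "ff k r > 0" "ff k s > 0" using ff_pos[OF k] rs by auto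
    have fsr: "ff k s \<le> ff k r" using ff_strict[OF k, of r s] rs by (cases "r = s") auto
    have q: "r / ff k r \<le> s / ff k s"
      using rs fr fsr by (intro frac_le) auto
    have "SS k (r / ff k r) \<le> SS k (s / ff k s)"
      by (rule SS_mono[OF _ q]) (use rs fr in auto)
    moreover have "SS k (r / ff k r) \<ge> 1" using SS_ge1[OF k] rs fr by auto
    ultimately have "1 / SS k (s / ff k s) \<le> 1 / SS k (r / ff k r)"
      by (intro divide_left_mono) auto
    thus "Tkj k 1 s \<le> Tkj k 1 r"
      unfolding Tkj1[OF k] using T1_formula[OF k] rs by auto
  qed
next
  note k = assms
  show "mono_on {0..<1} (Tkj k k)"
  proof (rule monotone_onI)
    fix r s :: real assume rs: "r \<in> {0..<1}" "s \<in> {0..<1}" "r \<le> s"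
    show "Tkj k k r \<le> Tkj k k s"
    proof (cases "r = s")
      case True thus ?thesis by simp
    next
      case False
      hence rs2: "r < s" using rs by auto
      have s0: "0 < s" "s < 1" using rs rs2 by auto
      have Ts: "Tkj k k s = 1 / SS k (ff k s / s)" using Tkjk[OF k s0] Tk_formula[OF k s0] by simp
      have fs: "0 \<le> ff k s" using ff_range[OF k, of s] s0 by auto
      have S1: "SS k (ff k s / s) \<ge> 1" using SS_ge1[OF k] fs s0 by auto
      show ?thesis
      proof (cases "r = 0")
        case True
        have T0: "Tkj k k r = 0^(k-1)" using True ff_0[OF k] by (simp add: Tkj_def fk_eq[OF k])
        show ?thesis
        proof (cases "k = 1")
          case True
          have "SS k (ff k s / s) = 1" using True by (simp add: SS_def)
          thus ?thesis using T0 Ts True by simp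
        next
          case False
          hence "Tkj k k r = 0" using T0 k by simp
          thus ?thesis using Ts S1 by simp
        qed
      next
        case False
        hence r0: "0 < r" "r < 1" using rs by auto
        have Tr: "Tkj k k r = 1 / SS k (ff k r / r)" using Tkjk[OF k r0] Tk_formula[OF k r0] by simp
        have fsr: "ff k s \<le> ff k r" using ff_strict[OF k, of r s] rs2 s0 r0 by auto
        have q: "ff k s / s \<le> ff k r / r"
          using fs fsr r0 rs2 by (intro frac_le) auto
        have "SS k (ff k s / s) \<le> SS k (ff k r / r)"
          by (rule SS_mono[OF _ q]) (use fs s0 in auto)
        hence "1 / SS k (ff k r / r) \<le> 1 / SS k (ff k s / s)"
          using S1 by (intro divide_left_mono) auto
        thus ?thesis using Tr Ts by simp
      qed
    qed
  qed
qed

end
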